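(* Let $k_1,k_2,k_3\ge 1$ be integers and $G$ the grid graph with vertex set $\{0,\dots,k_1\}\times\{0,\dots,k_2\}\times\{0,\dots,k_3\}$, two vertices adjacent iff they differ by $1$ in exactly one coordinate. Let $\mathcal B=\{B_1,\dots,B_m\}$ be a family of boxes $B_i=[a_i',a_i'']\times[b_i',b_i'']\times[c_i',c_i'']\subseteq\mathbb R^3$ with integers $0\le a_i'<a_i''\le k_1$, $0\le b_i'<b_i''\le k_2$, $0\le c_i'<c_i''\le k_3$, and let $G_i$ be the subgraph of $G$ induced by the vertices of $G$ lying in $B_i$. Let $\widetilde G$ be the graph with vertex set $V(G)\cup\{(u,i):1\le i\le m,\ u\in V(G_i)\}$ whose edges are: all edges of $G$; for each $i$, the edges $(u,i)(w,i)$ for every edge $uw$ of $G_i$; and for each $i$ and each $u\in V(G_i)$, the edge $u\,(u,i)$. Then $\widetilde G$ is a median graph.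
   Context: A connected graph is median if for every three vertices $x,y,z$ the set $I(x,y)\cap I(y,z)\cap I(z,x)$ is a single vertex, where $I(u,v)=\{w: d(u,w)+d(w,v)=d(u,v)\}$ and $d$ is the shortest-path distance. (Geometrically, $\widetilde G$ is the 1-skeleton of the box complex obtained from the box $[0,k_1]\times[0,k_2]\times[0,k_3]$ subdivided into unit cells by attaching, for each $i$, the 4-dimensional box $B_i\times[0,1]$ along $B_i$ in a new, $i$-th, coordinate direction.) *)

theory Defs
  imports Main
begin

definition walk_of_len :: "'v set \<Rightarrow> ('v \<Rightarrow> 'v \<Rightarrow> bool) \<Rightarrow> 'v \<Rightarrow> 'v \<Rightarrow> nat \<Rightarrow> bool" where
  "walk_of_len V E u v n \<longleftrightarrow> (\<exists>xs. length xs = Suc n \<and> hd xs = u \<and> last xs = v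
      \<and> set xs \<subseteq> V \<and> (\<forall>j < n. E (xs ! j) (xs ! Suc j)))"

definition graph_connected :: "'v set \<Rightarrow> ('v \<Rightarrow> 'v \<Rightarrow> bool) \<Rightarrow> bool" where
  "graph_connected V E \<longleftrightarrow> V \<noteq> {} \<and> (\<forall>u\<in>V. \<forall>v\<in>V. \<exists>n. walk_of_len V E u v n)"

definition gdist :: "'v set \<Rightarrow> ('v \<Rightarrow> 'v \<Rightarrow> bool) \<Rightarrow> 'v \<Rightarrow> 'v \<Rightarrow> nat" where
  "gdist V E u v = (LEAST n. walk_of_len V E u v n)"

definition interval :: "'v set \<Rightarrow> ('v \<Rightarrow> 'v \<Rightarrow> bool) \<Rightarrow> 'v \<Rightarrow> 'v \<Rightarrow> 'v set" where
  "interval V E u v = {w\<in>V. gdist V E u w + gdist V E w v = gdist V E u v}"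

definition median_graph :: "'v set \<Rightarrow> ('v \<Rightarrow> 'v \<Rightarrow> bool) \<Rightarrow> bool" where
  "median_graph V E \<longleftrightarrow> graph_connected V E \<and>
     (\<forall>x\<in>V. \<forall>y\<in>V. \<forall>z\<in>V. \<exists>!w. w \<in> interval V E x y \<inter> interval V E y z \<inter> interval V E z x)"

type_synonym pt = "nat \<times> nat \<times> nat"

definition grid_verts :: "nat \<Rightarrow> nat \<Rightarrow> nat \<Rightarrow> pt set" where
  "grid_verts k1 k2 k3 = {0..k1} \<times> {0..k2} \<times> {0..k3}"

fun grid_adj :: "pt \<Rightarrow> pt \<Rightarrow> bool" where
  "grid_adj (x1, x2, x3) (y1, y2, y3) \<longleftrightarrow>
     \<bar>int x1 - int y1\<bar> + \<bar>int x2 - int y2\<bar> + \<bar>int x3 - int y3\<bar> = 1"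

definition box_verts :: "nat \<Rightarrow> nat \<Rightarrow> nat \<Rightarrow> nat \<Rightarrow> nat \<Rightarrow> nat \<Rightarrow> pt set" where
  "box_verts a1 a2 b1 b2 c1 c2 = {a1..a2} \<times> {b1..b2} \<times> {c1..c2}"

text \<open>Vertex set of the augmented graph: Inl u for u in V(G), Inr (u,i) for u in V(G_i).\<close>
definition aug_verts :: "nat \<Rightarrow> nat \<Rightarrow> nat \<Rightarrow> nat \<Rightarrow> (nat \<Rightarrow> pt set) \<Rightarrow> (pt + pt \<times> nat) set" where
  "aug_verts k1 k2 k3 m B =
     Inl ` grid_verts k1 k2 k3 \<union> {Inr (u, i) | u i. i \<in> {1..m} \<and> u \<in> grid_verts k1 k2 k3 \<inter> B i}"

fun aug_adj :: "nat \<Rightarrow> nat \<Rightarrow> nat \<Rightarrow> nat \<Rightarrow> (nat \<Rightarrow> pt set) \<Rightarrow> (pt + pt \<times> nat) \<Rightarrow> (pt + pt \<times> nat) \<Rightarrow> bool" where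
  "aug_adj k1 k2 k3 m B (Inl u) (Inl w) \<longleftrightarrow>
     u \<in> grid_verts k1 k2 k3 \<and> w \<in> grid_verts k1 k2 k3 \<and> grid_adj u w"
| "aug_adj k1 k2 k3 m B (Inr (u, i)) (Inr (w, j)) \<longleftrightarrow>
     i = j \<and> i \<in> {1..m} \<and> u \<in> grid_verts k1 k2 k3 \<inter> B i \<and> w \<in> grid_verts k1 k2 k3 \<inter> B i \<and> grid_adj u w"
| "aug_adj k1 k2 k3 m B (Inl u) (Inr (w, i)) \<longleftrightarrow>
     u = w \<and> i \<in> {1..m} \<and> u \<in> grid_verts k1 k2 k3 \<inter> B i"
| "aug_adj k1 k2 k3 m B (Inr (w, i)) (Inl u) \<longleftrightarrow>
     u = w \<and> i \<in> {1..m} \<and> u \<in> grid_verts k1 k2 k3 \<inter> B i"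

end

theory Submission
  imports Defs
begin

definition med :: "'a::linorder \<Rightarrow> 'a \<Rightarrow> 'a \<Rightarrow> 'a" where
  "med a b c = max (min a b) (min (max a b) c)"

fun coord :: "pt \<Rightarrow> nat \<Rightarrow> nat" where
  "coord (a,b,c) k = (if k = 0 then a else if k = 1 then b else c)"
fun base :: "pt + pt \<times> nat \<Rightarrow> pt" where
  "base (Inl u) = u" | "base (Inr (u,i)) = u"
fun shelf :: "pt + pt \<times> nat \<Rightarrow> nat" where
  "shelf (Inl u) = 0" | "shelf (Inr (u,i)) = i"
definition ind :: "nat \<Rightarrow> nat \<Rightarrow> int" where
  "ind s k = (if s \<noteq> 0 \<and> k = s + 2 then 1 else 0)"
definition emb :: "pt + pt \<times> nat \<Rightarrow> nat \<Rightarrow> int" where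
  "emb x k = (if k < 3 then int (coord (base x) k) else ind (shelf x) k)"
fun l1 :: "pt \<Rightarrow> pt \<Rightarrow> int" where
  "l1 (a,b,c) (a',b',c') = \<bar>int a - int a'\<bar> + \<bar>int b - int b'\<bar> + \<bar>int c - int c'\<bar>"
definition sd :: "nat \<Rightarrow> nat \<Rightarrow> int" where
  "sd i j = (if i = j then 0 else if i = 0 \<or> j = 0 then 1 else 2)"
definition pm :: "pt \<Rightarrow> pt \<Rightarrow> pt \<Rightarrow> pt" where
  "pm u v w = (med (coord u 0) (coord v 0) (coord w 0), med (coord u 1) (coord v 1) (coord w 1),
               med (coord u 2) (coord v 2) (coord w 2))"

lemma med_int: "int (med a b c) = med (int a) (int b) (int c)"
  unfolding med_def by (auto simp: min_def max_def)

lemma med_range: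
  "(lo \<le> a \<and> a \<le> hi \<and> lo \<le> b \<and> b \<le> hi) \<or> (lo \<le> b \<and> b \<le> hi \<and> lo \<le> c \<and> c \<le> hi)
    \<or> (lo \<le> a \<and> a \<le> hi \<and> lo \<le> c \<and> c \<le> hi) \<Longrightarrow> lo \<le> med a b c \<and> med a b c \<le> (hi::'a::linorder)"
  unfolding med_def by (auto simp: min_def max_def)

lemma med_abs:
  "\<bar>a - med a b c\<bar> + \<bar>med a b c - b\<bar> = \<bar>a - (b::int)\<bar>"
  "\<bar>b - med a b c\<bar> + \<bar>med a b c - c\<bar> = \<bar>b - (c::int)\<bar>"
  "\<bar>c - med a b c\<bar> + \<bar>med a b c - a\<bar> = \<bar>c - (a::int)\<bar>"
  unfolding med_def by (auto simp: min_def max_def abs_if)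

lemma btw: "\<bar>a - v\<bar> + \<bar>v - b\<bar> = \<bar>a - (b::int)\<bar> \<Longrightarrow> min a b \<le> v \<and> v \<le> max a b"
  by (cases "a \<le> b") (auto simp: abs_if min_def max_def split: if_splits)

lemma med_unique:
  "\<bar>a - v\<bar> + \<bar>v - b\<bar> = \<bar>a - b\<bar> \<Longrightarrow> \<bar>b - v\<bar> + \<bar>v - c\<bar> = \<bar>b - c\<bar> \<Longrightarrow>
   \<bar>c - v\<bar> + \<bar>v - a\<bar> = \<bar>c - a\<bar> \<Longrightarrow> v = med a b (c::int)"
  apply (drule btw)+ unfolding med_def min_def max_def by (auto split: if_splits)

lemma sum_eq_pointwise:
  assumes "finite K" "(\<Sum>k\<in>K. \<bar>f k - v k\<bar>) + (\<Sum>k\<in>K. \<bar>v k - g k\<bar>) = (\<Sum>k\<in>K. \<bar>f k - (g k::int)\<bar>)"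
    "k \<in> K"
  shows "\<bar>f k - v k\<bar> + \<bar>v k - g k\<bar> = \<bar>f k - g k\<bar>"
proof -
  define T where "T k = \<bar>f k - v k\<bar> + \<bar>v k - g k\<bar> - \<bar>f k - g k\<bar>" for k
  have "sum T K = 0"
    using assms(2) unfolding T_def by (simp add: sum.distrib sum_subtractf)
  moreover have "\<And>k. k \<in> K \<Longrightarrow> 0 \<le> T k" unfolding T_def by simp
  ultimately have "\<forall>k\<in>K. T k = 0" using sum_nonneg_eq_0_iff[OF assms(1), of T] by simp
  then show ?thesis using assms(3) unfolding T_def by simp
qed

lemma box_coord:
  "u \<in> box_verts a1 a2 b1 b2 c1 c2 \<longleftrightarrow> a1 \<le> coord u 0 \<and> coord u 0 \<le> a2 \<and> b1 \<le> coord u 1 \<and> coord u 1 \<le> b2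
     \<and> c1 \<le> coord u 2 \<and> coord u 2 \<le> c2"
  by (cases u) (auto simp: box_verts_def)

lemma grid_box: "grid_verts k1 k2 k3 = box_verts 0 k1 0 k2 0 k3"
  by (simp add: grid_verts_def box_verts_def)

lemma l1_sum: "(\<Sum>k<3. \<bar>int (coord u k) - int (coord w k)\<bar>) = l1 u w"
  by (cases u; cases w) (simp add: numeral_3_eq_3 lessThan_Suc)

lemma l1_nonneg: "l1 u w \<ge> 0" by (cases u; cases w) auto
lemma l1_zero: "l1 u w = 0 \<Longrightarrow> u = w" by (cases u; cases w) auto
lemma l1_adj: "grid_adj u w \<Longrightarrow> l1 u w = 1" by (cases u; cases w) auto

lemma move:
  assumes "u \<noteq> w"
  shows "\<exists>z. grid_adj u z \<and> l1 z w + 1 = l1 u w \<and> (\<forall>a1 a2 b1 b2 c1 c2. u \<in> box_verts a1 a2 b1 b2 c1 c2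
     \<longrightarrow> w \<in> box_verts a1 a2 b1 b2 c1 c2 \<longrightarrow> z \<in> box_verts a1 a2 b1 b2 c1 c2)"
proof -
  obtain a b c where u: "u = (a,b,c)" by (cases u)
  obtain a' b' c' where w: "w = (a',b',c')" by (cases w)
  consider "a < a'" | "a' < a" | "a = a'" "b < b'" | "a = a'" "b' < b" | "a=a'" "b=b'" "c<c'"
    | "a=a'" "b=b'" "c'<c" using assms u w by (metis linorder_neqE_nat)
  then show ?thesis
  proof cases
    case 1 show ?thesis by (rule exI[of _ "(a+1,b,c)"]) (use 1 u w in \<open>auto simp: box_verts_def of_nat_diff\<close>)
  next
    case 2 show ?thesis by (rule exI[of _ "(a-1,b,c)"]) (use 2 u w in \<open>auto simp: box_verts_def of_nat_diff\<close>)
  next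
    case 3 show ?thesis by (rule exI[of _ "(a,b+1,c)"]) (use 3 u w in \<open>auto simp: box_verts_def of_nat_diff\<close>)
  next
    case 4 show ?thesis by (rule exI[of _ "(a,b-1,c)"]) (use 4 u w in \<open>auto simp: box_verts_def of_nat_diff\<close>)
  next
    case 5 show ?thesis by (rule exI[of _ "(a,b,c+1)"]) (use 5 u w in \<open>auto simp: box_verts_def of_nat_diff\<close>)
  next
    case 6 show ?thesis by (rule exI[of _ "(a,b,c-1)"]) (use 6 u w in \<open>auto simp: box_verts_def of_nat_diff\<close>)
  qed
qed

lemma ind_sum:
  assumes "sx \<le> m" "sy \<le> m"
  shows "(\<Sum>k\<in>{3..m+2}. \<bar>ind sx k - ind sy k\<bar>) = sd sx sy"
proof -
  have "\<And>k. \<bar>ind sx k - ind sy k\<bar> = (if sx \<noteq> 0 \<and> sx \<noteq> sy then (if k = sx + 2 then 1 else 0) else 0)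
      + (if sy \<noteq> 0 \<and> sx \<noteq> sy then (if k = sy + 2 then 1 else 0) else 0)"
    by (auto simp: ind_def)
  then have "(\<Sum>k\<in>{3..m+2}. \<bar>ind sx k - ind sy k\<bar>) =
     (if sx \<noteq> 0 \<and> sx \<noteq> sy then 1 else 0) + (if sy \<noteq> 0 \<and> sx \<noteq> sy then 1 else 0)"
    using assms by (simp add: sum.distrib)
  then show ?thesis by (auto simp: sd_def)
qed

locale aug =
  fixes k1 k2 k3 m :: nat and B :: "nat \<Rightarrow> pt set"
  assumes HB: "\<forall>i\<in>{1..m}. \<exists>a1 a2 b1 b2 c1 c2. B i = box_verts a1 a2 b1 b2 c1 c2"
begin

abbreviation "V \<equiv> aug_verts k1 k2 k3 m B"
abbreviation "E \<equiv> aug_adj k1 k2 k3 m B"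
abbreviation "G \<equiv> grid_verts k1 k2 k3"

definition D :: "pt + pt \<times> nat \<Rightarrow> pt + pt \<times> nat \<Rightarrow> int" where
  "D x y = (\<Sum>k\<le>m+2. \<bar>emb x k - emb y k\<bar>)"

lemma inV_Inl[simp]: "Inl u \<in> V \<longleftrightarrow> u \<in> G"
  by (auto simp: aug_verts_def)
lemma inV_Inr[simp]: "Inr (u,i) \<in> V \<longleftrightarrow> i \<in> {1..m} \<and> u \<in> G \<inter> B i"
  unfolding aug_verts_def by blast

lemma E_inV: "E x y \<Longrightarrow> x \<in> V \<and> y \<in> V"
  by (cases x; cases y) auto

lemma shelf_le: "x \<in> V \<Longrightarrow> shelf x \<le> m"
  by (cases x) auto

lemma D_formula:
  assumes "x \<in> V" "y \<in> V"
  shows "D x y = l1 (base x) (base y) + sd (shelf x) (shelf y)"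
proof -
  have split: "{..m+2} = {..<3} \<union> {3..m+2}" by auto
  have "D x y = (\<Sum>k<3. \<bar>emb x k - emb y k\<bar>) + (\<Sum>k\<in>{3..m+2}. \<bar>emb x k - emb y k\<bar>)"
    unfolding D_def split by (rule sum.union_disjoint) auto
  also have "(\<Sum>k<3. \<bar>emb x k - emb y k\<bar>) = (\<Sum>k<3. \<bar>int (coord (base x) k) - int (coord (base y) k)\<bar>)"
    by (rule sum.cong) (auto simp: emb_def)
  also have "\<dots> = l1 (base x) (base y)" by (rule l1_sum)
  also have "(\<Sum>k\<in>{3..m+2}. \<bar>emb x k - emb y k\<bar>) = (\<Sum>k\<in>{3..m+2}. \<bar>ind (shelf x) k - ind (shelf y) k\<bar>)"
    by (rule sum.cong) (auto simp: emb_def)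
  also have "\<dots> = sd (shelf x) (shelf y)" using ind_sum shelf_le assms by blast
  finally show ?thesis .
qed

lemma D_nonneg: "D x y \<ge> 0" unfolding D_def by (rule sum_nonneg) auto
lemma D_sym: "D x y = D y x" unfolding D_def by (simp add: abs_minus_commute)
lemma D_tri: "D x z \<le> D x y + D y z"
  unfolding D_def sum.distrib[symmetric] by (rule sum_mono) auto

lemma D_adj: "E x y \<Longrightarrow> D x y = 1"
  using E_inV[of x y] by (cases x; cases y) (auto simp: D_formula sd_def l1_adj)

lemma V_shape: "x \<in> V \<Longrightarrow> x = (if shelf x = 0 then Inl (base x) else Inr (base x, shelf x))"
  by (cases x) auto

lemma D_zero: "x \<in> V \<Longrightarrow> y \<in> V \<Longrightarrow> D x y = 0 \<Longrightarrow> x = y"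
  using l1_nonneg[of "base x" "base y"] l1_zero[of "base x" "base y"] V_shape[of x] V_shape[of y]
  by (auto simp: D_formula sd_def split: if_splits)

lemma step:
  assumes "x \<in> V" "y \<in> V" "x \<noteq> y"
  shows "\<exists>z. E x z \<and> D z y + 1 = D x y"
proof (cases x)
  case (Inl u)
  show ?thesis
  proof (cases y)
    case (Inl w)
    then obtain z where z: "grid_adj u z" "l1 z w + 1 = l1 u w" "z \<in> G"
      using move[of u w] assms \<open>x = Inl u\<close> by (auto simp: grid_box)
    show ?thesis
      by (rule exI[of _ "Inl z"]) (use z assms Inl \<open>x = Inl u\<close> in \<open>auto simp: D_formula sd_def\<close>)
  next
    case (Inr p)
    then obtain w i where y: "y = Inr (w,i)" by (cases p) auto
    show ?thesis
    proof (cases "u = w")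
      case True
      show ?thesis
        by (rule exI[of _ "Inr (w,i)"]) (use True assms y \<open>x = Inl u\<close> in \<open>auto simp: D_formula sd_def\<close>)
    next
      case False
      then obtain z where z: "grid_adj u z" "l1 z w + 1 = l1 u w" "z \<in> G"
        using move[of u w] assms \<open>x = Inl u\<close> y by (auto simp: grid_box)
      show ?thesis
        by (rule exI[of _ "Inl z"]) (use z assms y \<open>x = Inl u\<close> in \<open>auto simp: D_formula sd_def\<close>)
    qed
  qed
next
  case (Inr p)
  then obtain u i where x: "x = Inr (u,i)" by (cases p) auto
  show ?thesis
  proof (cases y)
    case (Inl w)
    show ?thesis
      by (rule exI[of _ "Inl u"]) (use assms x Inl in \<open>auto simp: D_formula sd_def\<close>)
  next
    case (Inr q)
    then obtain w j where y: "y = Inr (w,j)" by (cases q) auto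
    show ?thesis
    proof (cases "i = j")
      case True
      have "u \<noteq> w" using True assms x y by auto
      from assms x have "i \<in> {1..m}" by auto
      then obtain a1 a2 b1 b2 c1 c2 where Bi: "B i = box_verts a1 a2 b1 b2 c1 c2" using HB by blast
      have uw: "u \<in> G" "w \<in> G" "u \<in> B i" "w \<in> B i" using assms x y True by auto
      obtain z where z: "grid_adj u z" "l1 z w + 1 = l1 u w" "z \<in> G" "z \<in> B i"
        using move[of u w] \<open>u \<noteq> w\<close> uw unfolding grid_box Bi by blast
      show ?thesis
        by (rule exI[of _ "Inr (z,i)"]) (use z assms x y True in \<open>auto simp: D_formula sd_def\<close>)
    next
      case False
      show ?thesis
        by (rule exI[of _ "Inl u"]) (use False assms x y in \<open>auto simp: D_formula sd_def\<close>)
    qed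
  qed
qed

lemma walk_refl: "x \<in> V \<Longrightarrow> walk_of_len V E x x 0"
  unfolding walk_of_len_def by (rule exI[of _ "[x]"]) auto

lemma walk_cons:
  assumes "x \<in> V" "E x z" "walk_of_len V E z y n"
  shows "walk_of_len V E x y (Suc n)"
proof -
  obtain xs where xs: "length xs = Suc n" "hd xs = z" "last xs = y" "set xs \<subseteq> V"
    "\<forall>j<n. E (xs ! j) (xs ! Suc j)" using assms(3) unfolding walk_of_len_def by blast
  have ne: "xs \<noteq> []" using xs by auto
  have "\<forall>j<Suc n. E ((x#xs) ! j) ((x#xs) ! Suc j)"
  proof (intro allI impI)
    fix j assume "j < Suc n"
    show "E ((x#xs) ! j) ((x#xs) ! Suc j)"
    proof (cases j)
      case 0 then show ?thesis using assms(2) xs(2) ne by (simp add: hd_conv_nth)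
    next
      case (Suc j') then show ?thesis using xs(5) \<open>j < Suc n\<close> by simp
    qed
  qed
  then show ?thesis unfolding walk_of_len_def
    by (intro exI[of _ "x#xs"]) (use xs ne assms(1) in auto)
qed

lemma walk_lower:
  assumes "walk_of_len V E x y n"
  shows "D x y \<le> int n"
proof -
  obtain xs where xs: "length xs = Suc n" "hd xs = x" "last xs = y" "set xs \<subseteq> V"
    "\<forall>j<n. E (xs ! j) (xs ! Suc j)" using assms unfolding walk_of_len_def by blast
  have ne: "xs \<noteq> []" using xs by auto
  have "\<forall>j\<le>n. D x (xs ! j) \<le> int j"
  proof (intro allI impI)
    fix j assume "j \<le> n"
    then show "D x (xs ! j) \<le> int j"
    proof (induction j)
      case 0
      then show ?case using xs(2) ne by (simp add: hd_conv_nth[symmetric] D_def)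
    next
      case (Suc j)
      have "D x (xs ! Suc j) \<le> D x (xs ! j) + D (xs ! j) (xs ! Suc j)" by (rule D_tri)
      also have "D (xs ! j) (xs ! Suc j) = 1" using xs(5) Suc.prems by (simp add: D_adj)
      finally show ?case using Suc by simp
    qed
  qed
  then show ?thesis using xs(1,3) ne by (metis last_conv_nth diff_Suc_1 le_refl)
qed

lemma walk_upper: "x \<in> V \<Longrightarrow> y \<in> V \<Longrightarrow> walk_of_len V E x y (nat (D x y))"
proof (induction "nat (D x y)" arbitrary: x)
  case 0
  then have "x = y" using D_zero D_nonneg[of x y] by simp
  then show ?case using 0 walk_refl by simp
next
  case (Suc n)
  then have "x \<noteq> y" by (auto simp: D_def)
  then obtain z where z: "E x z" "D z y + 1 = D x y" using step Suc.prems by blast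
  have "n = nat (D z y)" using z(2) Suc.hyps(2) D_nonneg[of z y] by simp
  then have "walk_of_len V E z y n" using Suc E_inV[OF z(1)] by blast
  then show ?case using walk_cons Suc.prems z(1) Suc.hyps(2) by metis
qed

lemma gdist_D: "x \<in> V \<Longrightarrow> y \<in> V \<Longrightarrow> gdist V E x y = nat (D x y)"
  unfolding gdist_def
  by (rule Least_equality) (use walk_upper walk_lower in force)+

lemma interval_D: "x \<in> V \<Longrightarrow> y \<in> V \<Longrightarrow> w \<in> interval V E x y \<longleftrightarrow> w \<in> V \<and> D x w + D w y = D x y"
proof -
  assume a: "x \<in> V" "y \<in> V"
  have "w \<in> V \<Longrightarrow> nat (D x w) + nat (D w y) = nat (D x y) \<longleftrightarrow> D x w + D w y = D x y"
    using D_nonneg[of x w] D_nonneg[of w y] D_nonneg[of x y] by linarith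
  then show ?thesis unfolding interval_def using a by (auto simp: gdist_D)
qed

lemma V_base: "x \<in> V \<Longrightarrow> base x \<in> G" by (cases x) auto
lemma V_shelf: "x \<in> V \<Longrightarrow> shelf x \<noteq> 0 \<Longrightarrow> shelf x \<in> {1..m} \<and> base x \<in> B (shelf x)"
  by (cases x) auto

lemma med_ok:
  assumes "x \<in> V" "y \<in> V" "z \<in> V" "w \<in> V"
    "D x w + D w y = D x y" "D y w + D w z = D y z" "D z w + D w x = D z x" "k \<le> m + 2"
  shows "emb w k = med (emb x k) (emb y k) (emb z k)"
proof (rule med_unique)
  have s1: "(\<Sum>k\<le>m+2. \<bar>emb x k - emb w k\<bar>) + (\<Sum>k\<le>m+2. \<bar>emb w k - emb y k\<bar>) = (\<Sum>k\<le>m+2. \<bar>emb x k - emb y k\<bar>)"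
    using assms(5) unfolding D_def .
  have s2: "(\<Sum>k\<le>m+2. \<bar>emb y k - emb w k\<bar>) + (\<Sum>k\<le>m+2. \<bar>emb w k - emb z k\<bar>) = (\<Sum>k\<le>m+2. \<bar>emb y k - emb z k\<bar>)"
    using assms(6) unfolding D_def .
  have s3: "(\<Sum>k\<le>m+2. \<bar>emb z k - emb w k\<bar>) + (\<Sum>k\<le>m+2. \<bar>emb w k - emb x k\<bar>) = (\<Sum>k\<le>m+2. \<bar>emb z k - emb x k\<bar>)"
    using assms(7) unfolding D_def .
  have k: "k \<in> {..m+2}" using assms(8) by simp
  show "\<bar>emb x k - emb w k\<bar> + \<bar>emb w k - emb y k\<bar> = \<bar>emb x k - emb y k\<bar>"
    by (rule sum_eq_pointwise[OF _ s1 k]) simp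
  show "\<bar>emb y k - emb w k\<bar> + \<bar>emb w k - emb z k\<bar> = \<bar>emb y k - emb z k\<bar>"
    by (rule sum_eq_pointwise[OF _ s2 k]) simp
  show "\<bar>emb z k - emb w k\<bar> + \<bar>emb w k - emb x k\<bar> = \<bar>emb z k - emb x k\<bar>"
    by (rule sum_eq_pointwise[OF _ s3 k]) simp
qed

end

lemma coord_pm: "k < 3 \<Longrightarrow> coord (pm u v w) k = med (coord u k) (coord v k) (coord w k)"
  by (cases u; cases v; cases w) (auto simp: pm_def numeral_3_eq_3 less_Suc_eq)

lemma pm_box:
  assumes "(u \<in> S \<and> v \<in> S) \<or> (v \<in> S \<and> w \<in> S) \<or> (u \<in> S \<and> w \<in> S)"
    "S = box_verts a1 a2 b1 b2 c1 c2"
  shows "pm u v w \<in> S"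
proof -
  have h: "\<And>k lo hi. k < 3 \<Longrightarrow> (\<forall>t\<in>S. lo \<le> coord t k \<and> coord t k \<le> hi) \<Longrightarrow>
     lo \<le> coord (pm u v w) k \<and> coord (pm u v w) k \<le> hi"
    unfolding coord_pm by (rule med_range) (use assms(1) in blast)
  have q: "\<forall>t\<in>S. a1 \<le> coord t 0 \<and> coord t 0 \<le> a2" "\<forall>t\<in>S. b1 \<le> coord t 1 \<and> coord t 1 \<le> b2"
    "\<forall>t\<in>S. c1 \<le> coord t 2 \<and> coord t 2 \<le> c2" using box_coord unfolding assms(2) by blast+
  have "a1 \<le> coord (pm u v w) 0 \<and> coord (pm u v w) 0 \<le> a2"
    "b1 \<le> coord (pm u v w) 1 \<and> coord (pm u v w) 1 \<le> b2"
    "c1 \<le> coord (pm u v w) 2 \<and> coord (pm u v w) 2 \<le> c2"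
    using h[of 0 a1 a2] h[of 1 b1 b2] h[of 2 c1 c2] q by simp_all
  then show ?thesis by (simp add: assms(2) box_coord)
qed

lemma medb: "med (of_bool p) (of_bool q) (of_bool r) = (of_bool ((p\<and>q)\<or>(q\<and>r)\<or>(p\<and>r)) :: int)"
  by (cases p; cases q; cases r) (simp_all add: med_def)
lemma ind_med:
  "ind (if sx\<noteq>0 \<and> (sx=sy \<or> sx=sz) then sx else if sy \<noteq> 0 \<and> sy = sz then sy else 0) k
    = med (ind sx k) (ind sy k) (ind sz k)"
proof -
  have i: "ind s k = of_bool (s \<noteq> 0 \<and> k = s + 2)" for s by (simp add: ind_def)
  have "((if sx\<noteq>0 \<and> (sx=sy \<or> sx=sz) then sx else if sy \<noteq> 0 \<and> sy = sz then sy else 0) \<noteq> 0 \<and>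
      k = (if sx\<noteq>0 \<and> (sx=sy \<or> sx=sz) then sx else if sy \<noteq> 0 \<and> sy = sz then sy else 0) + 2)
    \<longleftrightarrow> ((sx \<noteq> 0 \<and> k = sx + 2) \<and> (sy \<noteq> 0 \<and> k = sy + 2) \<or> (sy \<noteq> 0 \<and> k = sy + 2) \<and> (sz \<noteq> 0 \<and> k = sz + 2)
      \<or> (sx \<noteq> 0 \<and> k = sx + 2) \<and> (sz \<noteq> 0 \<and> k = sz + 2))"
    by auto
  then show ?thesis unfolding i medb by simp
qed

context aug begin

lemma median_ex:
  assumes xyz: "x \<in> V" "y \<in> V" "z \<in> V"
  shows "\<exists>!w. w \<in> interval V E x y \<inter> interval V E y z \<inter> interval V E z x"
proof -
  define M where "M k = med (emb x k) (emb y k) (emb z k)" for k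
  define p where "p = pm (base x) (base y) (base z)"
  define s where "s = (if shelf x\<noteq>0 \<and> (shelf x=shelf y \<or> shelf x=shelf z) then shelf x
     else if shelf y \<noteq> 0 \<and> shelf y = shelf z then shelf y else 0)"
  define w where "w = (if s = 0 then Inl p else Inr (p, s))"
  have bw: "base w = p" and sw: "shelf w = s" by (auto simp: w_def)
  have embw: "emb w k = M k" for k
  proof (cases "k < 3")
    case True
    then show ?thesis unfolding M_def emb_def bw p_def using True by (simp add: coord_pm med_int)
  next
    case False
    then show ?thesis unfolding M_def emb_def sw s_def using False ind_med by simp
  qed
  have pG: "p \<in> G" unfolding p_def grid_box
    by (rule pm_box) (use V_base xyz in \<open>auto simp: grid_box\<close>)
  have wV: "w \<in> V"
  proof (cases "s = 0")
    case True then show ?thesis using pG by (simp add: w_def)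
  next
    case False
    have "shelf x \<noteq> 0 \<and> (shelf x = shelf y \<or> shelf x = shelf z) \<or> (shelf y \<noteq> 0 \<and> shelf y = shelf z)"
      using False by (auto simp: s_def split: if_splits)
    then have "s \<in> {1..m} \<and> ((base x \<in> B s \<and> base y \<in> B s) \<or> (base y \<in> B s \<and> base z \<in> B s)
        \<or> (base x \<in> B s \<and> base z \<in> B s))"
      using V_shelf[OF xyz(1)] V_shelf[OF xyz(2)] V_shelf[OF xyz(3)] unfolding s_def by auto
    moreover then obtain a1 a2 b1 b2 c1 c2 where "B s = box_verts a1 a2 b1 b2 c1 c2" using HB by blast
    ultimately have "p \<in> B s" unfolding p_def using pm_box by blast
    then show ?thesis using pG False \<open>s \<in> {1..m} \<and> _\<close> by (simp add: w_def)
  qed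
  have e1: "D x w + D w y = D x y" unfolding D_def sum.distrib[symmetric] embw M_def
    by (rule sum.cong) (simp_all add: med_abs)
  have e2: "D y w + D w z = D y z" unfolding D_def sum.distrib[symmetric] embw M_def
    by (rule sum.cong) (simp_all add: med_abs)
  have e3: "D z w + D w x = D z x" unfolding D_def sum.distrib[symmetric] embw M_def
    by (rule sum.cong) (simp_all add: med_abs)
  show ?thesis
  proof (rule ex1I[of _ w])
    show "w \<in> interval V E x y \<inter> interval V E y z \<inter> interval V E z x"
      using e1 e2 e3 wV xyz by (simp add: interval_D)
  next
    fix w' assume "w' \<in> interval V E x y \<inter> interval V E y z \<inter> interval V E z x"
    then have w': "w' \<in> V" "D x w' + D w' y = D x y" "D y w' + D w' z = D y z" "D z w' + D w' x = D z x"
      using xyz by (auto simp: interval_D)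
    have "\<And>k. k \<le> m + 2 \<Longrightarrow> emb w' k = emb w k"
      using med_ok[OF xyz w'] embw unfolding M_def by simp
    then have "D w' w = 0" unfolding D_def by simp
    then show "w' = w" using D_zero w'(1) wV by blast
  qed
qed

lemma median: "median_graph V E"
  unfolding median_graph_def graph_connected_def
proof (intro conjI ballI)
  have "Inl (0,0,0) \<in> V" by (simp add: grid_verts_def)
  then show "V \<noteq> {}" by blast
next
  fix u v assume "u \<in> V" "v \<in> V"
  then show "\<exists>n. walk_of_len V E u v n" using walk_upper by blast
next
  fix x y z assume "x \<in> V" "y \<in> V" "z \<in> V"
  then show "\<exists>!w. w \<in> interval V E x y \<inter> interval V E y z \<inter> interval V E z x"
    by (rule median_ex)
qed

end

theorem lemma1:
  fixes k1 k2 k3 m :: nat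
    and a1 a2 b1 b2 c1 c2 :: "nat \<Rightarrow> nat"
  assumes "k1 \<ge> 1" and "k2 \<ge> 1" and "k3 \<ge> 1"
    and "\<forall>i\<in>{1..m}. a1 i < a2 i \<and> a2 i \<le> k1"
    and "\<forall>i\<in>{1..m}. b1 i < b2 i \<and> b2 i \<le> k2"
    and "\<forall>i\<in>{1..m}. c1 i < c2 i \<and> c2 i \<le> k3"
  shows "median_graph
           (aug_verts k1 k2 k3 m (\<lambda>i. box_verts (a1 i) (a2 i) (b1 i) (b2 i) (c1 i) (c2 i)))
           (aug_adj k1 k2 k3 m (\<lambda>i. box_verts (a1 i) (a2 i) (b1 i) (b2 i) (c1 i) (c2 i)))"
proof -
  interpret aug k1 k2 k3 m "\<lambda>i. box_verts (a1 i) (a2 i) (b1 i) (b2 i) (c1 i) (c2 i)"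
    by unfold_locales blast
  show ?thesis by (rule median)
qed

end
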